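(* For every graph $G$ on $n\ge 2$ vertices, $\rho_T(G)\le n-1$.
   Context: Graphs are finite and simple. For $u,v\in(\mathbb{R}\cup\{\infty\})^k$ the min-plus tropical dot product is $u\odot v=\min\{u_1+v_1,\dots,u_k+v_k\}$ (with $a+\infty=\infty$). A min-plus $k$-tropical dot product representation of a graph $G=(V,E)$ is a map $f:V\to(\mathbb{R}\cup\{\infty\})^k$ together with a threshold $t>0$ such that for all distinct $x,y\in V$: $xy\in E$ if and only if $f(x)\odot f(y)\ge t$. $\rho_T(G)$ denotes the least $k\ge 1$ for which $G$ has a min-plus $k$-tropical dot product representation. *)

theory Defs
  imports Complex_Main "HOL-Library.Extended_Real"
begin

definition simple_graph :: "'a set \<Rightarrow> ('a \<Rightarrow> 'a \<Rightarrow> bool) \<Rightarrow> bool" where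
  "simple_graph V E \<longleftrightarrow> finite V \<and> (\<forall>x y. E x y \<longrightarrow> E y x) \<and> (\<forall>x. \<not> E x x)"

text \<open>Vectors in (R \<union> {\<infinity>})^k are functions nat \<Rightarrow> ereal whose components with
  index i < k are not -\<infinity>. Min-plus tropical dot product.\<close>
definition trop_dot :: "nat \<Rightarrow> (nat \<Rightarrow> ereal) \<Rightarrow> (nat \<Rightarrow> ereal) \<Rightarrow> ereal" where
  "trop_dot k u v = Min ((\<lambda>i. u i + v i) ` {..<k})"

definition trop_rep :: "'a set \<Rightarrow> ('a \<Rightarrow> 'a \<Rightarrow> bool) \<Rightarrow> nat \<Rightarrow> ('a \<Rightarrow> nat \<Rightarrow> ereal) \<Rightarrow> real \<Rightarrow> bool" where
  "trop_rep V E k f t \<longleftrightarrow> t > 0 \<and>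
     (\<forall>x\<in>V. \<forall>i<k. f x i \<noteq> -\<infinity>) \<and>
     (\<forall>x\<in>V. \<forall>y\<in>V. x \<noteq> y \<longrightarrow> (E x y \<longleftrightarrow> trop_dot k (f x) (f y) \<ge> ereal t))"

definition has_trop_rep :: "'a set \<Rightarrow> ('a \<Rightarrow> 'a \<Rightarrow> bool) \<Rightarrow> nat \<Rightarrow> bool" where
  "has_trop_rep V E k \<longleftrightarrow> (\<exists>f t. trop_rep V E k f t)"

definition rho_T :: "'a set \<Rightarrow> ('a \<Rightarrow> 'a \<Rightarrow> bool) \<Rightarrow> nat" where
  "rho_T V E = (LEAST k. k \<ge> 1 \<and> has_trop_rep V E k)"

end

theory Submission
  imports Defs
begin

lemma rep_exists:
  fixes V :: "'a set" and E :: "'a \<Rightarrow> 'a \<Rightarrow> bool" and n :: nat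
  assumes sg: "simple_graph V E" and cV: "card V = n" and n2: "n \<ge> 2"
  shows "has_trop_rep V E (n - 1)"
proof -
  have fin: "finite V" and sym: "\<And>x y. E x y \<Longrightarrow> E y x" using sg unfolding simple_graph_def by auto
  obtain g where g: "bij_betw g {0..<n} V" using ex_bij_betw_nat_finite[OF fin] cV by auto
  define f :: "'a \<Rightarrow> nat \<Rightarrow> ereal" where
    "f = (\<lambda>x i. if x = g i then ereal (-2) else if E x (g i) then ereal 3 else ereal 2)"
  let ?k = "n - 1"
  have key: "E x y \<longleftrightarrow> trop_dot ?k (f x) (f y) \<ge> ereal 1"
    if xV: "x \<in> V" and yV: "y \<in> V" and xy: "x \<noteq> y" for x y
  proof -
    have ne: "{..<?k} \<noteq> {}" using n2 by (simp add: lessThan_empty_iff)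
    have dot: "trop_dot ?k (f x) (f y) \<ge> ereal 1 \<longleftrightarrow> (\<forall>i<?k. f x i + f y i \<ge> ereal 1)"
      unfolding trop_dot_def using ne by (subst Min_ge_iff) auto
    show ?thesis
    proof
      assume e: "E x y"
      show "trop_dot ?k (f x) (f y) \<ge> ereal 1" unfolding dot
      proof (intro allI impI)
        fix i assume "i < ?k"
        show "f x i + f y i \<ge> ereal 1"
          using e sym[OF e] xy unfolding f_def by auto
      qed
    next
      assume d: "trop_dot ?k (f x) (f y) \<ge> ereal 1"
      show "E x y"
      proof (rule ccontr)
        assume ne2: "\<not> E x y"
        hence ne3: "\<not> E y x" using sym by blast
        obtain i where i: "i < n" "g i = x" using g xV unfolding bij_betw_def by force
        obtain j where j: "j < n" "g j = y" using g yV unfolding bij_betw_def by force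
        have "i \<noteq> j" using i j xy by auto
        hence "i < ?k \<or> j < ?k" using i j by auto
        thus False
        proof
          assume "i < ?k"
          hence "f x i + f y i \<ge> ereal 1" using d dot by auto
          thus False using i ne3 xy unfolding f_def by auto
        next
          assume "j < ?k"
          hence "f x j + f y j \<ge> ereal 1" using d dot by auto
          thus False using j ne2 xy unfolding f_def by auto
        qed
      qed
    qed
  qed
  have "trop_rep V E ?k f 1"
    unfolding trop_rep_def using key by (auto simp: f_def)
  thus ?thesis unfolding has_trop_rep_def by blast
qed

theorem mainTheorem3:
  fixes V :: "'a set" and E :: "'a \<Rightarrow> 'a \<Rightarrow> bool" and n :: nat
  assumes "simple_graph V E" and "card V = n" and "n \<ge> 2"
  shows "(\<exists>k. 1 \<le> k \<and> k \<le> n - 1 \<and> has_trop_rep V E k) \<and> rho_T V E \<le> n - 1"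
proof -
  have h: "has_trop_rep V E (n - 1)" using rep_exists assms by blast
  have "1 \<le> n - 1" using assms by auto
  with h show ?thesis unfolding rho_T_def by (auto intro: Least_le)
qed

end
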